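(* Fix a level $\ell<K$. Let $\tilde{\boldsymbol\theta}\in\mathbb R^{\mathcal Z^*}$ be such that $\boldsymbol\mu=\tilde{\boldsymbol p}(\tilde{\boldsymbol\theta})$ is coherent among all levels $k>\ell$. Then for every $t\in\mathbb R$ and every node $y\in\mathcal Y^*$ with $\mathrm{level}(y)\le\ell$, the vector $\boldsymbol\mu'=\tilde{\boldsymbol p}(\tilde{\boldsymbol\theta}+t\,\mathbf a_y)$ is also coherent among all levels $k>\ell$, where $\mathbf a_y$ denotes the column of $\mathbf A$ indexed by $y$.
   Context: Fix an integer $K\ge1$. Let $T^*$ be the complete binary tree of depth $K$ whose nodes are intervals: the root (level $0$) has $I_{\mathit{root}}=[0,1)$, and each node $z$ at level $k<K$ with $I_z=[\alpha_z,\beta_z)$ has children $\mathrm{left}(z)$, $\mathrm{right}(z)$ at level $k+1$ with intervals $[\alpha_z,\frac{\alpha_z+\beta_z}2)$ and $[\frac{\alpha_z+\beta_z}2,\beta_z)$. Let $\mathcal Z^*$ be its node set, $\mathcal Z_k$ the nodes at level $k$, $\mathrm{level}(z)$ the level of $z$, and $\mathcal Y^*=\mathcal Z^*\setminus\mathcal Z_K$. Fix liquidity parameters $b_k>0$ ($k=0,\dots,K$) and set $B_\ell=\sum_{k=\ell+1}^K b_k$. For $\tilde{\boldsymbol\theta}\in\mathbb R^{\mathcal Z^*}$, $\tilde p_z(\tilde{\boldsymbol\theta})=e^{\tilde\theta_z/b_k}/\sum_{z'\in\mathcal Z_k}e^{\tilde\theta_{z'}/b_k}$ for $z\in\mathcal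 Z_k$. The constraint matrix $\mathbf A\in\mathbb R^{\mathcal Z^*\times\mathcal Y^*}$ has entries $A_{zy}=B_{\mathrm{level}(z)}$ if $z=y$, $-b_{\mathrm{level}(z)}$ if $I_z\subsetneq I_y$, and $0$ otherwise. A vector $\boldsymbol\mu\in\mathbb R^{\mathcal Z^*}$ is coherent among a set $L$ of levels if for all $k,m\in L$ with $k<m$ and all $z\in\mathcal Z_k$, $\mu_z=\sum_{u\in\mathcal Z_m:\ I_u\subseteq I_z}\mu_u$. *)

theory Defs
  imports Complex_Main
begin

text \<open>Nodes of the complete binary tree of depth K are pairs (k, j) with k \<le> K and
  j < 2^k; node (k, j) sits at level k and carries the dyadic interval
  [j/2^k, (j+1)/2^k). This is exactly the interval obtained by the recursive halving
  starting from the root interval [0,1).\<close>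

definition nodes :: "nat \<Rightarrow> (nat \<times> nat) set" where
  "nodes K = {(k, j). k \<le> K \<and> j < 2 ^ k}"

definition level :: "nat \<times> nat \<Rightarrow> nat" where
  "level z = fst z"

definition alpha :: "nat \<times> nat \<Rightarrow> real" where
  "alpha z = real (snd z) / 2 ^ fst z"

definition beta :: "nat \<times> nat \<Rightarrow> real" where
  "beta z = (real (snd z) + 1) / 2 ^ fst z"

definition Ivl :: "nat \<times> nat \<Rightarrow> real set" where
  "Ivl z = {alpha z ..< beta z}"

definition lvl_nodes :: "nat \<Rightarrow> nat \<Rightarrow> (nat \<times> nat) set" where
  "lvl_nodes K k = {z \<in> nodes K. level z = k}"

definition inner_nodes :: "nat \<Rightarrow> (nat \<times> nat) set" where
  "inner_nodes K = nodes K - lvl_nodes K K"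

definition Bsum :: "nat \<Rightarrow> (nat \<Rightarrow> real) \<Rightarrow> nat \<Rightarrow> real" where
  "Bsum K b l = (\<Sum>k = l + 1..K. b k)"

definition ptil :: "nat \<Rightarrow> (nat \<Rightarrow> real) \<Rightarrow> (nat \<times> nat \<Rightarrow> real) \<Rightarrow> nat \<times> nat \<Rightarrow> real" where
  "ptil K b \<theta> z = exp (\<theta> z / b (level z)) /
      (\<Sum>z' \<in> lvl_nodes K (level z). exp (\<theta> z' / b (level z)))"

definition Amat :: "nat \<Rightarrow> (nat \<Rightarrow> real) \<Rightarrow> nat \<times> nat \<Rightarrow> nat \<times> nat \<Rightarrow> real" where
  "Amat K b z y = (if z = y then Bsum K b (level z)
                   else if Ivl z \<subset> Ivl y then - b (level z) else 0)"

definition coherent_among :: "nat \<Rightarrow> nat set \<Rightarrow> (nat \<times> nat \<Rightarrow> real) \<Rightarrow> bool" where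
  "coherent_among K L \<mu> \<longleftrightarrow>
     (\<forall>k \<in> L. \<forall>m \<in> L. k < m \<longrightarrow>
        (\<forall>z \<in> lvl_nodes K k. \<mu> z = (\<Sum>u \<in> {u \<in> lvl_nodes K m. Ivl u \<subseteq> Ivl z}. \<mu> u)))"

end

theory Submission
  imports Defs
begin
lemma ivl_sub:
  assumes "k \<le> m"
  shows "Ivl (m,j) \<subseteq> Ivl (k,i) \<longleftrightarrow> i = j div 2^(m-k)"
proof -
  define p :: nat where "p = 2^(m-k)"
  have p0: "p > 0" by (simp add: p_def)
  have pm: "(2::real)^m = 2^k * real p" using assms by (simp add: p_def power_add[symmetric])
  have ne: "real j / 2^m < (real j + 1) / 2^m" by (simp add: divide_strict_right_mono)
  have "Ivl (m,j) \<subseteq> Ivl (k,i) \<longleftrightarrow> real i / 2^k \<le> real j / 2^m \<and> (real j + 1) / 2^m \<le> (real i + 1)/2^k"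
    using ne by (simp add: Ivl_def alpha_def beta_def)
  also have "\<dots> \<longleftrightarrow> real i * real p \<le> real j \<and> real j + 1 \<le> (real i + 1) * real p"
  proof -
    have k0: "(0::real) < 2^k" by simp
    have rp: "0 < real p" using p0 by simp
    have a: "real i / 2^k \<le> real j / (2^k * real p) \<longleftrightarrow> real i * real p \<le> real j"
      using k0 rp by (simp add: field_simps)
    have b: "(real j + 1) / (2^k * real p) \<le> (real i + 1)/2^k \<longleftrightarrow> real j + 1 \<le> (real i + 1) * real p"
      using k0 rp by (simp add: divide_le_eq le_divide_eq mult.commute mult.left_commute)
    show ?thesis unfolding pm using a b by simp
  qed
  also have "\<dots> \<longleftrightarrow> i * p \<le> j \<and> j < (i+1) * p"
    by (metis Suc_eq_plus1 Suc_le_eq of_nat_1 of_nat_add of_nat_le_iff of_nat_mult)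
  also have "\<dots> \<longleftrightarrow> i = j div p"
    using p0 by (meson div_less_iff_less_mult le_antisym less_add_one less_eq_div_iff_mult_less_eq less_inc_imp_less_eq)
  finally show ?thesis by (simp add: p_def)
qed
lemma fin_lvl: "finite (lvl_nodes K k)"
proof -
  have "lvl_nodes K k \<subseteq> {..K} \<times> {..<2^K}"
    unfolding lvl_nodes_def nodes_def
    by (auto intro: less_le_trans[OF _ power_increasing[of _ K "2::nat"]])
  then show ?thesis by (rule finite_subset) auto
qed

lemma lvl_mem: "w \<in> lvl_nodes K k \<longleftrightarrow> (\<exists>j. w = (k,j) \<and> k \<le> K \<and> j < 2^k)"
  unfolding lvl_nodes_def nodes_def level_def by auto

lemma partition_sum:
  assumes "k \<le> m" "m \<le> K"
  shows "(\<Sum>z\<in>lvl_nodes K k. \<Sum>u\<in>{u\<in>lvl_nodes K m. Ivl u \<subseteq> Ivl z}. f u) = (\<Sum>u\<in>lvl_nodes K m. f u)"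
proof -
  define g where "g u = (k, snd u div 2^(m-k))" for u :: "nat \<times> nat"
  have img: "g ` lvl_nodes K m \<subseteq> lvl_nodes K k"
  proof
    fix x assume "x \<in> g ` lvl_nodes K m"
    then obtain j where j: "j < 2^m" "x = (k, j div 2^(m-k))" using assms
      by (auto simp: lvl_mem g_def)
    have "(2::nat)^m = 2^k * 2^(m-k)" using assms by (simp add: power_add[symmetric])
    then have "j div 2^(m-k) < 2^k" using j(1) by (simp add: div_less_iff_less_mult)
    then show "x \<in> lvl_nodes K k" using j assms by (auto simp: lvl_mem)
  qed
  have eq: "{u\<in>lvl_nodes K m. Ivl u \<subseteq> Ivl z} = {u\<in>lvl_nodes K m. g u = z}" if hz: "z \<in> lvl_nodes K k" for z
  proof -
    obtain i where z: "z = (k,i)" using hz unfolding lvl_mem by blast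
    show ?thesis unfolding z
    proof (intro Collect_cong)
      fix u
      show "(u \<in> lvl_nodes K m \<and> Ivl u \<subseteq> Ivl (k, i)) = (u \<in> lvl_nodes K m \<and> g u = (k, i))"
      proof (cases "u \<in> lvl_nodes K m")
        case True
        then obtain j where u: "u = (m,j)" unfolding lvl_mem by blast
        show ?thesis unfolding u g_def using ivl_sub[OF assms(1), of j i] by auto
      qed simp
    qed
  qed
  have "(\<Sum>z\<in>lvl_nodes K k. \<Sum>u\<in>{u\<in>lvl_nodes K m. Ivl u \<subseteq> Ivl z}. f u)
      = (\<Sum>z\<in>lvl_nodes K k. \<Sum>u\<in>{u\<in>lvl_nodes K m. g u = z}. f u)"
    using eq by (intro sum.cong refl) simp
  also have "\<dots> = (\<Sum>u\<in>lvl_nodes K m. f u)"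
    by (rule sum.group[OF fin_lvl fin_lvl img])
  finally show ?thesis .
qed

lemma ivl_ne: "Ivl (a,x) = Ivl (c,w) \<Longrightarrow> a = c"
proof -
  assume h: "Ivl (a,x) = Ivl (c,w)"
  have ne: "real n / 2^q < (real n + 1) / 2^q" for n q by (simp add: divide_strict_right_mono)
  have "alpha (a,x) = alpha (c,w) \<and> beta (a,x) = beta (c,w)"
    using h ne[of x a] ne[of w c] unfolding Ivl_def
    by (simp add: alpha_def beta_def atLeastLessThan_eq_iff)
  then have "beta (a,x) - alpha (a,x) = beta (c,w) - alpha (c,w)" by simp
  moreover have d: "(real n+1)/2^q - real n/2^q = 1/(2::real)^q" for n q
    by (simp add: diff_divide_distrib[symmetric])
  ultimately have "1 / (2::real)^a = 1 / 2^c" by (simp add: alpha_def beta_def)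
  then have "(2::real)^a = 2^c" by simp
  then show "a = c" by simp
qed

lemma strict_iff:
  assumes "ly < lw"
  shows "Ivl (lw,w) \<subset> Ivl (ly,jy) \<longleftrightarrow> jy = w div 2^(lw-ly)"
  using ivl_sub[of ly lw w jy] assms ivl_ne[of lw w ly jy] by auto

lemma inherit:
  assumes "ly < k" "k \<le> m" "Ivl (m,j) \<subseteq> Ivl (k,i)"
  shows "Ivl (m,j) \<subset> Ivl (ly,jy) \<longleftrightarrow> Ivl (k,i) \<subset> Ivl (ly,jy)"
proof -
  have i: "i = j div 2^(m-k)" using ivl_sub assms by blast
  have "j div 2^(m-ly) = (j div 2^(m-k)) div 2^(k-ly)"
  proof -
    have "m - ly = (m-k) + (k-ly)" using assms by simp
    then have "(2::nat)^(m-ly) = 2^(m-k) * 2^(k-ly)" by (simp add: power_add)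
    then show ?thesis by (simp add: div_mult2_eq)
  qed
  then show ?thesis using strict_iff assms i by auto
qed

theorem lemma2:
  fixes K l :: nat and b :: "nat \<Rightarrow> real" and \<theta> :: "nat \<times> nat \<Rightarrow> real"
    and t :: real and y :: "nat \<times> nat"
  assumes "K \<ge> 1"
    and "\<forall>k \<le> K. b k > 0"
    and "l < K"
    and "coherent_among K {k. l < k \<and> k \<le> K} (ptil K b \<theta>)"
    and "y \<in> inner_nodes K"
    and "level y \<le> l"
  shows "coherent_among K {k. l < k \<and> k \<le> K}
           (ptil K b (\<lambda>z. \<theta> z + t * Amat K b z y))"
proof -
  obtain ly jy where y: "y = (ly, jy)" by (cases y)
  have lyl: "ly \<le> l" using assms(6) y by (simp add: level_def)
  define \<theta>' where "\<theta>' = (\<lambda>z. \<theta> z + t * Amat K b z y)"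
  define g where "g w = (if Ivl w \<subset> Ivl y then exp (-t) else 1)" for w
  define E where "E k w = exp (\<theta> w / b k)" for k w
  define S where "S k = (\<Sum>w\<in>lvl_nodes K k. ptil K b \<theta> w * g w)" for k
  have lev: "level w = k" if "w \<in> lvl_nodes K k" for w k using that by (simp add: lvl_nodes_def)
  have A: "exp (\<theta>' w / b k) = E k w * g w" if "w \<in> lvl_nodes K k" "l < k" "k \<le> K" for w k
  proof -
    have bk: "b k > 0" using assms(2) that by auto
    have ne: "w \<noteq> y" using that lev[OF that(1)] lyl y by (auto simp: level_def)
    have am: "Amat K b w y = (if Ivl w \<subset> Ivl y then - b k else 0)"
      using ne lev[OF that(1)] by (simp add: Amat_def)
    show ?thesis
    proof (cases "Ivl w \<subset> Ivl y")
      case True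
      have h: "\<theta>' w / b k = \<theta> w / b k + (- t)" using bk True by (simp add: \<theta>'_def am field_simps)
      show ?thesis unfolding h exp_add using True by (simp add: E_def g_def)
    next
      case False
      then show ?thesis by (simp add: \<theta>'_def am E_def g_def)
    qed
  qed
  have B: "ptil K b \<theta>' w = ptil K b \<theta> w * g w / S k" if "w \<in> lvl_nodes K k" "l < k" "k \<le> K" for w k
  proof -
    define Z where "Z = (\<Sum>w'\<in>lvl_nodes K k. E k w')"
    have "(k,0) \<in> lvl_nodes K k" using that by (simp add: lvl_mem)
    then have Zp: "Z > 0" unfolding Z_def E_def
      by (intro sum_pos fin_lvl) auto
    have p: "ptil K b \<theta> w' = E k w' / Z" if "w' \<in> lvl_nodes K k" for w'
      using lev[OF that] by (simp add: ptil_def Z_def E_def)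
    have S: "S k = (\<Sum>w'\<in>lvl_nodes K k. E k w' * g w') / Z"
      unfolding S_def sum_divide_distrib by (intro sum.cong refl) (simp add: p)
    have "ptil K b \<theta>' w = E k w * g w / (\<Sum>w'\<in>lvl_nodes K k. E k w' * g w')"
      unfolding ptil_def lev[OF that(1)] using A that by (simp cong: sum.cong)
    also have "\<dots> = ptil K b \<theta> w * g w / S k" using Zp by (simp add: S p[OF that(1)])
    finally show ?thesis .
  qed
  have G: "g u = g z" if H: "u \<in> lvl_nodes K m" "z \<in> lvl_nodes K k" "Ivl u \<subseteq> Ivl z" "l < k" "k \<le> m" for u z k m
  proof -
    obtain j where u: "u = (m,j)" using H(1) unfolding lvl_mem by blast
    obtain i where z: "z = (k,i)" using H(2) unfolding lvl_mem by blast
    show ?thesis unfolding g_def y u z using inherit[of ly k m j i jy] H lyl unfolding u z by auto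
  qed
  show ?thesis unfolding coherent_among_def \<theta>'_def[symmetric]
  proof (intro ballI impI)
    fix k m z assume k: "k \<in> {k. l < k \<and> k \<le> K}" and m: "m \<in> {k. l < k \<and> k \<le> K}" and km: "k < m"
      and z: "z \<in> lvl_nodes K k"
    have coh: "ptil K b \<theta> z' = (\<Sum>u\<in>{u\<in>lvl_nodes K m. Ivl u \<subseteq> Ivl z'}. ptil K b \<theta> u)"
      if "z' \<in> lvl_nodes K k" for z'
      using assms(4) k m km that unfolding coherent_among_def by blast
    have SS: "S k = S m"
    proof -
      have "S k = (\<Sum>z'\<in>lvl_nodes K k. \<Sum>u\<in>{u\<in>lvl_nodes K m. Ivl u \<subseteq> Ivl z'}. ptil K b \<theta> u * g u)"
        unfolding S_def
      proof (intro sum.cong refl)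
        fix z' assume z': "z' \<in> lvl_nodes K k"
        show "ptil K b \<theta> z' * g z' = (\<Sum>u\<in>{u\<in>lvl_nodes K m. Ivl u \<subseteq> Ivl z'}. ptil K b \<theta> u * g u)"
          unfolding coh[OF z'] sum_distrib_right
          using G[OF _ z' _ _ ] k km by (intro sum.cong refl) auto
      qed
      also have "\<dots> = S m" unfolding S_def using km m by (intro partition_sum) auto
      finally show ?thesis .
    qed
    have "ptil K b \<theta>' z = ptil K b \<theta> z * g z / S m" using B[OF z] k SS by auto
    also have "\<dots> = (\<Sum>u\<in>{u\<in>lvl_nodes K m. Ivl u \<subseteq> Ivl z}. ptil K b \<theta> u * g u / S m)"
      unfolding coh[OF z] sum_distrib_right sum_divide_distrib
      using G[OF _ z _ _ ] k km by (intro sum.cong refl) auto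
    also have "\<dots> = (\<Sum>u\<in>{u\<in>lvl_nodes K m. Ivl u \<subseteq> Ivl z}. ptil K b \<theta>' u)"
      using B m by (intro sum.cong refl) auto
    finally show "ptil K b \<theta>' z = (\<Sum>u\<in>{u\<in>lvl_nodes K m. Ivl u \<subseteq> Ivl z}. ptil K b \<theta>' u)" .
  qed
qed
end
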